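(* Let $F$ be a field of characteristic not 2 or 3, and consider the split cube space $V=F^2\otimes F^2\otimes F^2$ with the action of $\tilde M(F)=(GL_2(F)^3)^0\rtimes S_3$. Let $v_0=u_1\otimes u_1\otimes u_1-u_2\otimes u_2\otimes u_2$ (the distinguished cube $(a,e,f,b)=(1,0,0,-1)$). Then \[\mathrm{Stab}_{(GL_2^3)^0}(v_0)=\Big\{\big(\mathrm{diag}(t_1,t_1^{-1}),\mathrm{diag}(t_2,t_2^{-1}),\mathrm{diag}(t_3,t_3^{-1})\big):t_1t_2t_3=1\Big\}\rtimes\{1,(w,w,w)\},\quad w=\begin{pmatrix}0&1\\1&0\end{pmatrix},\] so $\mathrm{Stab}_{M}(v_0)\cong\mathbb G_m^2\rtimes\mathbb Z/2\mathbb Z$, and $\mathrm{Stab}_{\tilde M}(v_0)=\mathrm{Stab}_M(v_0)\rtimes S_3$. This group coincides, as a subgroup of $(GL_2^3)^0\rtimes S_3=GL_2(F^3)^0\rtimes S_3$, with the $F$-automorphism group $\mathrm{Aut}_F(F^3,C_0,Q_0,\beta_0)$ of the split twisted composition algebra.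
   Context: $u_1=(1,0)^T$, $u_2=(0,1)^T$. Cube coordinates $(a,e,f,b)$, $e=(e_1,e_2,e_3)$, $f=(f_1,f_2,f_3)$: $a$ is the coefficient of $u_1^{\otimes3}$, $b$ of $u_2^{\otimes3}$, $e_i$ of the basis vector with $u_2$ in the $i$-th factor and $u_1$ elsewhere, $f_i$ of the basis vector with $u_1$ in the $i$-th factor and $u_2$ elsewhere. $(GL_2^3)^0$ is the group of triples $(g_1,g_2,g_3)$ of invertible $2\times2$ matrices with common determinant $d$; it acts on $V$ by $d^{-1}g_1\otimes g_2\otimes g_3$, and $S_3$ acts by permuting the tensor factors. The split twisted composition algebra $C_0$ is $E^2$ with $E=F^3$, $Q_0(x,y)=xy\in E$, $\beta_0(x,y)=(y^\#,x^\#)$ where $(x_1,x_2,x_3)^\#=(x_2x_3,x_3x_1,x_1x_2)$; its $F$-automorphisms are pairs $(\phi,\sigma)$, $\sigma\in S_3=\mathrm{Aut}(F^3)$, $\phi$ an $F$-linear bijection of $E^2$ with $\phi(av)=\sigma(a)\phi(v)$, $\sigma\circ Q_0=Q_0\circ\phi$, $\phi\circ\beta_0=\beta_0\circ\phi$; writing $\phi$ as an element of $GL_2(E)=GL_2(F)^3$ composed with $\sigma$ acting coordinatewise embeds this group into $GL_2(F^3)\rtimes S_3$. *)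

theory Defs
  imports "HOL-Library.Numeral_Type" "HOL-Combinatorics.Permutations"
begin

(* Basis index of F^2: False = u_1, True = u_2.
   A 2x2 matrix is  m :: bool => bool => 'a,  m i j = entry in row i, column j.
   Tensor factors are indexed by the type 3 = {0,1,2}.
   A cube v in V = F^2 (x) F^2 (x) F^2 is a function  (3 => bool) => 'a :
   v x is the coefficient of u_{x 0} (x) u_{x 1} (x) u_{x 2}.
   A triple (g_1,g_2,g_3) of matrices is  g :: 3 => bool => bool => 'a. *)

type_synonym 'a mat2 = "bool \<Rightarrow> bool \<Rightarrow> 'a"
type_synonym 'a cube = "(3 \<Rightarrow> bool) \<Rightarrow> 'a"

definition det2 :: "'a::comm_ring_1 mat2 \<Rightarrow> 'a" where
  "det2 m = m False False * m True True - m False True * m True False"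

definition mmult2 :: "'a::comm_ring_1 mat2 \<Rightarrow> 'a mat2 \<Rightarrow> 'a mat2" where
  "mmult2 m n = (\<lambda>i j. \<Sum>k\<in>UNIV. m i k * n k j)"

definition diag2 :: "'a::field \<Rightarrow> 'a mat2" where
  "diag2 t = (\<lambda>i j. if i = j then (if i then inverse t else t) else 0)"

definition wmat :: "'a::comm_ring_1 mat2" where
  "wmat = (\<lambda>i j. if i = j then 0 else 1)"

(* (GL_2^3)^0 : triples of invertible matrices with common determinant *)
definition M0 :: "(3 \<Rightarrow> 'a::field mat2) set" where
  "M0 = {g. \<exists>d. d \<noteq> 0 \<and> (\<forall>k. det2 (g k) = d)}"

definition S3 :: "(3 \<Rightarrow> 3) set" where
  "S3 = {\<sigma>. \<sigma> permutes (UNIV :: 3 set)}"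

definition tens_act :: "(3 \<Rightarrow> 'a::field mat2) \<Rightarrow> 'a cube \<Rightarrow> 'a cube" where
  "tens_act g v = (\<lambda>x. inverse (det2 (g 0)) *
      (\<Sum>y\<in>UNIV. (\<Prod>k\<in>UNIV. g k (x k) (y k)) * v y))"

(* S_3 permuting the tensor factors: sigma(v_0 (x) v_1 (x) v_2) = (x)_j v_{sigma^{-1} j} *)
definition perm_act :: "(3 \<Rightarrow> 3) \<Rightarrow> 'a cube \<Rightarrow> 'a cube" where
  "perm_act \<sigma> v = (\<lambda>x. v (x \<circ> \<sigma>))"

definition v0 :: "'a::comm_ring_1 cube" where
  "v0 = (\<lambda>x. if x = (\<lambda>_. False) then 1 else if x = (\<lambda>_. True) then - 1 else 0)"

definition Stab_M :: "(3 \<Rightarrow> 'a::field mat2) set" where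
  "Stab_M = {g \<in> M0. tens_act g v0 = v0}"

(* element (g, sigma) of (GL_2^3)^0 \<rtimes> S_3 acts as g \<circ> sigma *)
definition Stab_Mtilde :: "((3 \<Rightarrow> 'a::field mat2) \<times> (3 \<Rightarrow> 3)) set" where
  "Stab_Mtilde = {(g, \<sigma>). g \<in> M0 \<and> \<sigma> \<in> S3 \<and> tens_act g (perm_act \<sigma> v0) = v0}"

definition Torus :: "(3 \<Rightarrow> 'a::field mat2) set" where
  "Torus = {g. \<exists>t::3 \<Rightarrow> 'a. (\<forall>k. t k \<noteq> 0) \<and> t 0 * t 1 * t 2 = 1 \<and> g = (\<lambda>k. diag2 (t k))}"

type_synonym 'a E = "3 \<Rightarrow> 'a"

definition sharp :: "'a::comm_ring_1 E \<Rightarrow> 'a E" where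
  "sharp x = (\<lambda>k. x (k + 1) * x (k + 2))"

definition Q0 :: "'a::comm_ring_1 E \<times> 'a E \<Rightarrow> 'a E" where
  "Q0 v = (\<lambda>k. fst v k * snd v k)"

definition beta0 :: "'a::comm_ring_1 E \<times> 'a E \<Rightarrow> 'a E \<times> 'a E" where
  "beta0 v = (sharp (snd v), sharp (fst v))"

(* sigma in S_3 = Aut(F^3): e_i \<mapsto> e_{sigma i} *)
definition sigE :: "(3 \<Rightarrow> 3) \<Rightarrow> 'a E \<Rightarrow> 'a E" where
  "sigE \<sigma> a = a \<circ> inv \<sigma>"

definition Esmult :: "'a::comm_ring_1 E \<Rightarrow> 'a E \<times> 'a E \<Rightarrow> 'a E \<times> 'a E" where
  "Esmult a v = ((\<lambda>k. a k * fst v k), (\<lambda>k. a k * snd v k))"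

definition is_autC0 :: "('a::field E \<times> 'a E \<Rightarrow> 'a E \<times> 'a E) \<Rightarrow> (3 \<Rightarrow> 3) \<Rightarrow> bool" where
  "is_autC0 \<phi> \<sigma> \<longleftrightarrow> \<sigma> \<in> S3 \<and> bij \<phi>
     \<and> (\<forall>v w. \<phi> ((\<lambda>k. fst v k + fst w k), (\<lambda>k. snd v k + snd w k))
              = ((\<lambda>k. fst (\<phi> v) k + fst (\<phi> w) k), (\<lambda>k. snd (\<phi> v) k + snd (\<phi> w) k)))
     \<and> (\<forall>c v. \<phi> (Esmult (\<lambda>_. c) v) = Esmult (\<lambda>_. c) (\<phi> v))
     \<and> (\<forall>a v. \<phi> (Esmult a v) = Esmult (sigE \<sigma> a) (\<phi> v))
     \<and> (\<forall>v. sigE \<sigma> (Q0 v) = Q0 (\<phi> v))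
     \<and> (\<forall>v. \<phi> (beta0 v) = beta0 (\<phi> v))"

(* the E-linear map of g = (g_1,g_2,g_3) in GL_2(E) = GL_2(F)^3 on E^2 *)
definition gE :: "(3 \<Rightarrow> 'a::comm_ring_1 mat2) \<Rightarrow> 'a E \<times> 'a E \<Rightarrow> 'a E \<times> 'a E" where
  "gE g v = ((\<lambda>k. g k False False * fst v k + g k False True * snd v k),
             (\<lambda>k. g k True False * fst v k + g k True True * snd v k))"

(* the image of Aut_F(F^3, C_0, Q_0, beta_0) in GL_2(F^3) \<rtimes> S_3 :
   (phi, sigma) \<mapsto> (g, sigma) where phi = g \<circ> (sigma acting coordinatewise) *)
definition AutC0 :: "((3 \<Rightarrow> 'a::field mat2) \<times> (3 \<Rightarrow> 3)) set" where
  "AutC0 = {(g, \<sigma>). (\<forall>k. det2 (g k) \<noteq> 0) \<and>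
       is_autC0 (\<lambda>v. gE g (sigE \<sigma> (fst v), sigE \<sigma> (snd v))) \<sigma>}"

end

theory Submission
  imports Defs
begin
lemma three_cases: "(k::3) = 0 \<or> k = 1 \<or> k = 2"
proof (induct k rule: bit1_induct)
  fix z :: int assume "0 \<le> z" "z < int CARD(1 bit1)"
  then have "z = 0 \<or> z = 1 \<or> z = 2" by simp arith
  then show "(of_int z::3) = 0 \<or> of_int z = 1 \<or> of_int z = 2" by auto
qed
lemma UNIV3: "(UNIV::3 set) = {0,1,2}"
proof -
  have "x \<in> {0,1,2}" for x :: 3 using three_cases[of x] by blast
  then show ?thesis by blast
qed
lemma n3: "(0::3) \<noteq> 1" "(0::3) \<noteq> 2" "(1::3) \<noteq> 2" by simp_all
lemma prod3: "(\<Prod>k\<in>UNIV. f k) = f (0::3) * f 1 * f 2"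
  unfolding UNIV3 using n3 by (simp add: mult.assoc)
lemma sum_bool: "(\<Sum>k\<in>UNIV. f (k::bool)) = f False + f True" by (simp add: UNIV_bool)

definition mk :: "bool \<Rightarrow> bool \<Rightarrow> bool \<Rightarrow> 3 \<Rightarrow> bool" where
  "mk p q r = (\<lambda>k. if k = 0 then p else if k = 1 then q else r)"
lemma mk_eq: "mk (x 0) (x 1) (x 2) = x"
proof (rule ext)
  fix k :: 3 show "mk (x 0) (x 1) (x 2) k = x k" using three_cases[of k] unfolding mk_def by auto
qed
lemma mk_app[simp]: "mk p q r 0 = p" "mk p q r 1 = q" "mk p q r 2 = r"
  by (simp_all add: mk_def)
lemma all_cube: "(\<forall>x. P x) \<longleftrightarrow> (\<forall>p q r. P (mk p q r))"
proof
  assume "\<forall>p q r. P (mk p q r)"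
  then have "P (mk (x 0) (x 1) (x 2))" for x :: "3 \<Rightarrow> bool" by blast
  then show "\<forall>x. P x" unfolding mk_eq by blast
qed blast
lemma const_iff: "(x = (\<lambda>_. c)) \<longleftrightarrow> x 0 = c \<and> x 1 = c \<and> x (2::3) = c"
proof
  assume "x 0 = c \<and> x 1 = c \<and> x 2 = c"
  then show "x = (\<lambda>_. c)" using three_cases by (intro ext) metis
qed auto

lemma delta1: fixes f :: "'b::finite \<Rightarrow> 'a::comm_ring_1" shows "(\<Sum>y\<in>UNIV. f y * (if y = c then 1 else 0)) = f c"
proof -
  have "(\<Sum>y\<in>UNIV. f y * (if y = c then 1 else 0)) = (\<Sum>y\<in>UNIV. (if y = c then f y else 0))"
    by (rule sum.cong) auto
  also have "\<dots> = f c" by (subst sum.delta) auto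
  finally show ?thesis .
qed

lemma tens_v0: "tens_act g v0 x = inverse (det2 (g 0)) *
   ((\<Prod>k\<in>UNIV. g k (x k) False) - (\<Prod>k\<in>UNIV. g k (x k) True))"
proof -
  have ne: "(\<lambda>_::3. False) \<noteq> (\<lambda>_. True)" by (simp add: fun_eq_iff)
  have v: "v0 y = (if y = (\<lambda>_. False) then 1 else 0) - (if y = (\<lambda>_. True) then 1 else 0)" for y :: "3 \<Rightarrow> bool"
    using ne unfolding v0_def by auto
  have "(\<Sum>y\<in>UNIV. (\<Prod>k\<in>UNIV. g k (x k) (y k)) * v0 y)
     = (\<Sum>y\<in>UNIV. (\<Prod>k\<in>UNIV. g k (x k) (y k)) * (if y = (\<lambda>_. False) then 1 else 0))
      - (\<Sum>y\<in>UNIV. (\<Prod>k\<in>UNIV. g k (x k) (y k)) * (if y = (\<lambda>_. True) then 1 else 0))"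
    unfolding v right_diff_distrib by (rule sum_subtractf)
  also have "\<dots> = (\<Prod>k\<in>UNIV. g k (x k) False) - (\<Prod>k\<in>UNIV. g k (x k) True)"
    unfolding delta1 by simp
  finally show ?thesis unfolding tens_act_def by simp
qed

lemma indep2:
  fixes a b c e u v :: "'a::field"
  assumes "a*u - b*v = 0" "c*u - e*v = 0" "a*e - b*c \<noteq> 0"
  shows "u = 0 \<and> v = 0"
proof -
  have "u*(a*e - b*c) = e*(a*u - b*v) - b*(c*u - e*v)" by (simp add: algebra_simps)
  also have "\<dots> = 0" using assms by simp
  finally have u: "u = 0" using assms(3) by simp
  have "v*(a*e - b*c) = c*(a*u - b*v) - a*(c*u - e*v)" by (simp add: algebra_simps)
  also have "\<dots> = 0" using assms by simp
  finally have "v = 0" using assms(3) by simp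
  with u show ?thesis by simp
qed

lemma cube_alg:
  fixes a0 a1 a2 b0 b1 b2 c0 c1 c2 e0 e1 e2 d :: "'a::field"
  assumes d0: "a0*e0 - b0*c0 = d" and d1: "a1*e1 - b1*c1 = d" and d2: "a2*e2 - b2*c2 = d" and dn: "d \<noteq> 0"
  and FFF: "a0*a1*a2 - b0*b1*b2 = d"
  and TTT: "c0*c1*c2 - e0*e1*e2 = -d"
  and FFT: "a0*a1*c2 - b0*b1*e2 = 0"
  and FTF: "a0*c1*a2 - b0*e1*b2 = 0"
  and TFF: "c0*a1*a2 - e0*b1*b2 = 0"
  and FTT: "a0*c1*c2 - b0*e1*e2 = 0"
  and TFT: "c0*a1*c2 - e0*b1*e2 = 0"
  and TTF: "c0*c1*a2 - e0*e1*b2 = 0"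
  shows "(b0 = 0 \<and> b1 = 0 \<and> b2 = 0 \<and> c0 = 0 \<and> c1 = 0 \<and> c2 = 0 \<and> a0*e0 = 1 \<and> a1*e1 = 1 \<and> a2*e2 = 1 \<and> a0*a1*a2 = 1)
       \<or> (a0 = 0 \<and> a1 = 0 \<and> a2 = 0 \<and> e0 = 0 \<and> e1 = 0 \<and> e2 = 0 \<and> b0*c0 = 1 \<and> b1*c1 = 1 \<and> b2*c2 = 1 \<and> b0*b1*b2 = 1)"
proof -
  have s0a: "a1*c2 = 0 \<and> b1*e2 = 0"
    by (rule indep2[of a0 _ b0 _ c0 e0]) (use FFT TFT d0 dn in \<open>simp_all add: mult.assoc\<close>)
  have s0b: "c1*a2 = 0 \<and> e1*b2 = 0"
    by (rule indep2[of a0 _ b0 _ c0 e0]) (use FTF TTF d0 dn in \<open>simp_all add: mult.assoc\<close>)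
  have s1a: "a0*c2 = 0 \<and> b0*e2 = 0"
    by (rule indep2[of a1 _ b1 _ c1 e1]) (use FFT FTT d1 dn in \<open>(simp_all add: algebra_simps)\<close>)
  have s1b: "c0*a2 = 0 \<and> e0*b2 = 0"
    by (rule indep2[of a1 _ b1 _ c1 e1]) (use TFF TTF d1 dn in \<open>(simp_all add: algebra_simps)\<close>)
  have s2a: "a0*c1 = 0 \<and> b0*e1 = 0"
    by (rule indep2[of a2 _ b2 _ c2 e2]) (use FTF FTT d2 dn in \<open>(simp_all add: algebra_simps)\<close>)
  have s2b: "c0*a1 = 0 \<and> e0*b1 = 0"
    by (rule indep2[of a2 _ b2 _ c2 e2]) (use TFF TFT d2 dn in \<open>(simp_all add: algebra_simps)\<close>)
  show ?thesis
  proof (cases "a0 = 0")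
    case False
    then have c12: "c1 = 0" "c2 = 0" using s2a s1a by auto
    then have a12: "a1 \<noteq> 0" "a2 \<noteq> 0" "e1 \<noteq> 0" "e2 \<noteq> 0" using d1 d2 dn by auto
    then have c0: "c0 = 0" using s2b by auto
    then have e0: "e0 \<noteq> 0" using d0 dn by auto
    have b: "b0 = 0" "b1 = 0" "b2 = 0" using s1a s0a s1b a12 e0 by simp_all
    have ae: "a0*e0 = d" "a1*e1 = d" "a2*e2 = d" using d0 d1 d2 b c0 c12 by auto
    have p1: "a0*a1*a2 = d" using FFF b by simp
    have p2: "e0*e1*e2 = d" using TTT c0 c12 by simp
    have "d*d*d = d*d"
    proof -
      have "d*d*d = (a0*e0)*(a1*e1)*(a2*e2)" using ae by simp
      also have "\<dots> = (a0*a1*a2)*(e0*e1*e2)" by (simp add: algebra_simps)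
      finally show ?thesis using p1 p2 by simp
    qed
    then have "d = 1" using dn by simp
    then show ?thesis using ae p1 b c0 c12 by simp
  next
    case True
    then have bc0: "b0 \<noteq> 0" "c0 \<noteq> 0" using d0 dn by auto
    then have a12: "a1 = 0" "a2 = 0" using s2b s1b by auto
    then have bc12: "b1 \<noteq> 0" "c1 \<noteq> 0" "b2 \<noteq> 0" "c2 \<noteq> 0" using d1 d2 dn by auto
    have e: "e0 = 0" "e1 = 0" "e2 = 0" using s2b s0b s1a bc12 bc0 by simp_all
    have bc: "b0*c0 = -d" "b1*c1 = -d" "b2*c2 = -d" using d0 d1 d2 e True a12 by auto
    have p1: "b0*b1*b2 = -d" using FFF True by (simp add: minus_equation_iff)
    have p2: "c0*c1*c2 = -d" using TTT e by simp
    have "-(d*d*d) = d*d"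
    proof -
      have "-(d*d*d) = (b0*c0)*(b1*c1)*(b2*c2)" using bc by simp
      also have "\<dots> = (b0*b1*b2)*(c0*c1*c2)" by (simp add: algebra_simps)
      finally show ?thesis using p1 p2 by simp
    qed
    then have "d*d*(d+1) = 0" by (simp add: algebra_simps add_eq_0_iff2)
    then have "d + 1 = 0" using dn by simp
    then have "d = -1" by (simp add: eq_neg_iff_add_eq_0)
    then show ?thesis using bc p1 True a12 e by simp
  qed
qed

definition Dg :: "(3 \<Rightarrow> 'a::field mat2) \<Rightarrow> bool" where
  "Dg g \<longleftrightarrow> (\<forall>k. g k False True = 0 \<and> g k True False = 0 \<and> g k False False * g k True True = 1)
      \<and> g 0 False False * g 1 False False * g 2 False False = 1"
definition Ag :: "(3 \<Rightarrow> 'a::field mat2) \<Rightarrow> bool" where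
  "Ag g \<longleftrightarrow> (\<forall>k. g k False False = 0 \<and> g k True True = 0 \<and> g k False True * g k True False = 1)
      \<and> g 0 False True * g 1 False True * g 2 False True = 1"

lemma mat_eqI:
  fixes m n :: "'a mat2"
  assumes "m False False = n False False" "m False True = n False True"
    "m True False = n True False" "m True True = n True True"
  shows "m = n"
proof (intro ext)
  fix i j show "m i j = n i j" using assms by (cases i; cases j) auto
qed

lemma diag2_simps[simp]: "diag2 t False False = t" "diag2 t False True = 0"
  "diag2 t True False = 0" "diag2 t True True = inverse t"
  by (simp_all add: diag2_def)

lemma mw_simps[simp]: "mmult2 (diag2 t) wmat False False = 0" "mmult2 (diag2 t) wmat False True = t"
  "mmult2 (diag2 t) wmat True False = inverse t" "mmult2 (diag2 t) wmat True True = 0"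
  by (simp_all add: mmult2_def sum_bool wmat_def)

lemma inv_from_prod: "(a::'a::field) * e = 1 \<Longrightarrow> e = inverse a"
  by (metis inverse_unique mult.commute)

lemma Torus_eq: "Torus = {g. Dg g}"
proof (intro set_eqI iffI)
  fix g :: "3 \<Rightarrow> 'a mat2"
  assume "g \<in> Torus"
  then obtain t where t: "\<forall>k. t k \<noteq> 0" "t 0 * t 1 * t 2 = 1" "g = (\<lambda>k. diag2 (t k))"
    unfolding Torus_def by blast
  then show "g \<in> {g. Dg g}" unfolding Dg_def by simp
next
  fix g :: "3 \<Rightarrow> 'a mat2"
  assume "g \<in> {g. Dg g}"
  then have D: "Dg g" by simp
  define t where "t = (\<lambda>k. g k False False)"
  have tn: "\<forall>k. t k \<noteq> 0"
  proof
    fix k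
    have "t k * g k True True = 1" using D unfolding Dg_def t_def by simp
    then show "t k \<noteq> 0" by auto
  qed
  have "g = (\<lambda>k. diag2 (t k))"
  proof (rule ext, rule mat_eqI)
    fix k
    show "g k True True = diag2 (t k) True True"
      using D unfolding Dg_def t_def by (simp add: inv_from_prod)
  qed (use D in \<open>simp_all add: Dg_def t_def\<close>)
  moreover have "t 0 * t 1 * t 2 = 1" using D unfolding Dg_def t_def by simp
  ultimately show "g \<in> Torus" unfolding Torus_def using tn by blast
qed

lemma wTorus_eq: "(\<lambda>g. \<lambda>k. mmult2 (g k) wmat) ` Torus = {g. Ag g}"
proof (intro set_eqI iffI)
  fix g :: "3 \<Rightarrow> 'a mat2"
  assume "g \<in> (\<lambda>g. \<lambda>k. mmult2 (g k) wmat) ` Torus"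
  then obtain h where h: "h \<in> Torus" "g = (\<lambda>k. mmult2 (h k) wmat)" by (rule imageE)
  from h(1) obtain t where t: "\<forall>k. t k \<noteq> 0" "t 0 * t 1 * t 2 = 1" "h = (\<lambda>k. diag2 (t k))"
    unfolding Torus_def by blast
  have "g = (\<lambda>k. mmult2 (diag2 (t k)) wmat)" using h(2) t(3) by simp
  with t show "g \<in> {g. Ag g}" unfolding Ag_def by simp
next
  fix g :: "3 \<Rightarrow> 'a mat2"
  assume "g \<in> {g. Ag g}"
  then have D: "Ag g" by simp
  define t where "t = (\<lambda>k. g k False True)"
  have tn: "\<forall>k. t k \<noteq> 0"
  proof
    fix k
    have "t k * g k True False = 1" using D unfolding Ag_def t_def by simp
    then show "t k \<noteq> 0" by auto
  qed
  have "g = (\<lambda>k. mmult2 (diag2 (t k)) wmat)"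
  proof (rule ext, rule mat_eqI)
    fix k
    show "g k True False = mmult2 (diag2 (t k)) wmat True False"
      using D unfolding Ag_def t_def by (simp add: inv_from_prod)
  qed (use D in \<open>simp_all add: Ag_def t_def\<close>)
  moreover have "(\<lambda>k. diag2 (t k)) \<in> Torus" unfolding Torus_def
    proof (intro CollectI exI conjI)
      show "\<forall>k. t k \<noteq> 0" by (rule tn)
      show "t 0 * t 1 * t 2 = 1" using D unfolding Ag_def t_def by simp
    qed simp
  ultimately show "g \<in> (\<lambda>g. \<lambda>k. mmult2 (g k) wmat) ` Torus" by (rule image_eqI)
qed

lemma tens_v0_3: "tens_act g v0 x = inverse (det2 (g 0)) *
   (g 0 (x 0) False * g 1 (x 1) False * g 2 (x 2) False - g 0 (x 0) True * g 1 (x 1) True * g 2 (x 2) True)"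
  unfolding tens_v0 prod3 ..

lemma v0_mk: "v0 (mk p q r) = (if \<not>p \<and> \<not>q \<and> \<not>r then 1 else if p \<and> q \<and> r then -1 else 0)"
  unfolding v0_def const_iff by simp

lemma stab_eq:
  assumes "tens_act g v0 = v0" "det2 (g 0) = d" "d \<noteq> 0"
  shows "g 0 p False * g 1 q False * g 2 r False - g 0 p True * g 1 q True * g 2 r True = d * v0 (mk p q r)"
proof -
  have "tens_act g v0 (mk p q r) = v0 (mk p q r)" using assms(1) by simp
  then have "inverse d * (g 0 p False * g 1 q False * g 2 r False - g 0 p True * g 1 q True * g 2 r True) = v0 (mk p q r)"
    unfolding tens_v0_3 assms(2) by simp
  then show ?thesis using assms(3) by (simp add: field_simps)
qed

lemma StabM_sub: assumes "g \<in> Stab_M" shows "Dg g \<or> Ag g"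
proof -
  from assms obtain d where d: "d \<noteq> 0" "\<forall>k. det2 (g k) = d" and t: "tens_act g v0 = v0"
    unfolding Stab_M_def M0_def by blast
  note E = stab_eq[OF t spec[OF d(2), of 0] d(1)]
  have FFF: "g 0 False False * g 1 False False * g 2 False False - g 0 False True * g 1 False True * g 2 False True = d"
    using E[of False False False] by (simp add: v0_mk)
  have TTT: "g 0 True False * g 1 True False * g 2 True False - g 0 True True * g 1 True True * g 2 True True = -d"
    using E[of True True True] by (simp add: v0_mk)
  have FFT: "g 0 False False * g 1 False False * g 2 True False - g 0 False True * g 1 False True * g 2 True True = 0"
    using E[of False False True] by (simp add: v0_mk)
  have FTF: "g 0 False False * g 1 True False * g 2 False False - g 0 False True * g 1 True True * g 2 False True = 0"
    using E[of False True False] by (simp add: v0_mk)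
  have TFF: "g 0 True False * g 1 False False * g 2 False False - g 0 True True * g 1 False True * g 2 False True = 0"
    using E[of True False False] by (simp add: v0_mk)
  have FTT: "g 0 False False * g 1 True False * g 2 True False - g 0 False True * g 1 True True * g 2 True True = 0"
    using E[of False True True] by (simp add: v0_mk)
  have TFT: "g 0 True False * g 1 False False * g 2 True False - g 0 True True * g 1 False True * g 2 True True = 0"
    using E[of True False True] by (simp add: v0_mk)
  have TTF: "g 0 True False * g 1 True False * g 2 False False - g 0 True True * g 1 True True * g 2 False True = 0"
    using E[of True True False] by (simp add: v0_mk)
  have dd: "g k False False * g k True True - g k False True * g k True False = d" for k
    using d(2) unfolding det2_def by simp
  have "\<forall>k. g k = g k" by simp
  from cube_alg[OF dd[of 0] dd[of 1] dd[of 2] d(1) FFF TTT FFT FTF TFF FTT TFT TTF]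
  have C: "(g 0 False True = 0 \<and> g 1 False True = 0 \<and> g 2 False True = 0 \<and> g 0 True False = 0 \<and> g 1 True False = 0 \<and> g 2 True False = 0 \<and>
     g 0 False False * g 0 True True = 1 \<and> g 1 False False * g 1 True True = 1 \<and> g 2 False False * g 2 True True = 1 \<and> g 0 False False * g 1 False False * g 2 False False = 1)
    \<or> (g 0 False False = 0 \<and> g 1 False False = 0 \<and> g 2 False False = 0 \<and> g 0 True True = 0 \<and> g 1 True True = 0 \<and> g 2 True True = 0 \<and>
     g 0 False True * g 0 True False = 1 \<and> g 1 False True * g 1 True False = 1 \<and> g 2 False True * g 2 True False = 1 \<and> g 0 False True * g 1 False True * g 2 False True = 1)" .
  have all3: "(\<forall>k. P k) \<longleftrightarrow> P 0 \<and> P 1 \<and> P (2::3)" for P by (metis three_cases)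
  show ?thesis using C unfolding Dg_def Ag_def all3 by blast
qed

lemma all3: "(\<forall>k. P k) \<longleftrightarrow> P 0 \<and> P 1 \<and> P (2::3)" by (metis three_cases)

lemma Dg_stab: assumes "Dg g" shows "g \<in> Stab_M"
proof -
  have D: "g k False True = 0" "g k True False = 0" "g k False False * g k True True = 1" for k
    using assms unfolding Dg_def by auto
  have P: "g 0 False False * g 1 False False * g 2 False False = 1" using assms unfolding Dg_def by auto
  have det: "det2 (g k) = 1" for k using D[of k] unfolding det2_def by simp
  have "(g 0 False False * g 1 False False * g 2 False False) * (g 0 True True * g 1 True True * g 2 True True)
     = (g 0 False False * g 0 True True) * (g 1 False False * g 1 True True) * (g 2 False False * g 2 True True)"
    by (simp add: algebra_simps)
  then have P2: "g 0 True True * g 1 True True * g 2 True True = 1" using P D by simp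
  have M: "g \<in> M0" unfolding M0_def using det by auto
  have "tens_act g v0 = v0"
  proof
    fix x :: "3 \<Rightarrow> bool"
    have x: "x = mk (x 0) (x 1) (x 2)" by (simp add: mk_eq)
    show "tens_act g v0 x = v0 x"
      apply (subst (2) x)
      unfolding tens_v0_3 det v0_mk
      by (cases "x 0"; cases "x 1"; cases "x 2") (simp_all add: D P P2)
  qed
  with M show ?thesis unfolding Stab_M_def by simp
qed

lemma Ag_stab: assumes "Ag g" shows "g \<in> Stab_M"
proof -
  have D: "g k False False = 0" "g k True True = 0" "g k False True * g k True False = 1" for k
    using assms unfolding Ag_def by auto
  have P: "g 0 False True * g 1 False True * g 2 False True = 1" using assms unfolding Ag_def by auto
  have det: "det2 (g k) = -1" for k using D[of k] unfolding det2_def by simp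
  have "(g 0 False True * g 1 False True * g 2 False True) * (g 0 True False * g 1 True False * g 2 True False)
     = (g 0 False True * g 0 True False) * (g 1 False True * g 1 True False) * (g 2 False True * g 2 True False)"
    by (simp add: algebra_simps)
  then have P2: "g 0 True False * g 1 True False * g 2 True False = 1" using P D by simp
  have M: "g \<in> M0" unfolding M0_def using det by auto
  have "tens_act g v0 = v0"
  proof
    fix x :: "3 \<Rightarrow> bool"
    have x: "x = mk (x 0) (x 1) (x 2)" by (simp add: mk_eq)
    show "tens_act g v0 x = v0 x"
      apply (subst (2) x)
      unfolding tens_v0_3 det v0_mk
      by (cases "x 0"; cases "x 1"; cases "x 2") (simp_all add: D P P2)
  qed
  with M show ?thesis unfolding Stab_M_def by simp
qed

lemma StabM_eq: "Stab_M = {g. Dg g \<or> Ag g}"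
  using StabM_sub Dg_stab Ag_stab by blast

lemma perm_v0: assumes "\<sigma> \<in> S3" shows "perm_act \<sigma> v0 = v0"
proof
  fix x :: "3 \<Rightarrow> bool"
  have p: "\<sigma> permutes UNIV" using assms unfolding S3_def by simp
  have c: "(x \<circ> \<sigma> = (\<lambda>_. c)) \<longleftrightarrow> x = (\<lambda>_. c)" for c
  proof
    assume h: "x \<circ> \<sigma> = (\<lambda>_. c)"
    show "x = (\<lambda>_. c)"
    proof
      fix k
      have "x k = x (\<sigma> (inv \<sigma> k))" using permutes_inverses(1)[OF p] by simp
      also have "\<dots> = c" using h by (metis comp_apply)
      finally show "x k = c" .
    qed
  qed auto
  show "perm_act \<sigma> v0 x = v0 x" unfolding perm_act_def v0_def c by simp
qed

lemma StabMt_eq: "Stab_Mtilde = Stab_M \<times> S3"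
  unfolding Stab_Mtilde_def Stab_M_def by (auto simp: perm_v0)

lemma num34: "(3::3) = 0" "(4::3) = 1" by simp_all

lemma tri3: "(u::3) \<noteq> m \<Longrightarrow> v \<noteq> m \<Longrightarrow> u \<noteq> v \<Longrightarrow> (u = m+1 \<and> v = m+2) \<or> (u = m+2 \<and> v = m+1)"
  apply (insert three_cases[of u] three_cases[of v] three_cases[of m])
  apply (elim disjE)
  apply (simp_all add: num34)
  done

lemma k12: "(k::3) + 1 \<noteq> k" "k + 2 \<noteq> k" "k + 1 \<noteq> k + 2"
  using three_cases[of k] by auto

lemma sharp_comm: assumes "\<sigma> \<in> S3" shows "sigE \<sigma> (sharp x) = sharp (sigE \<sigma> x)"
proof
  fix k :: 3
  have p: "inv \<sigma> permutes UNIV" using assms unfolding S3_def by (simp add: permutes_inv)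
  have i: "inj (inv \<sigma>)" using permutes_inj[OF p] .
  let ?m = "inv \<sigma> k" and ?u = "inv \<sigma> (k+1)" and ?v = "inv \<sigma> (k+2)"
  have n1: "?u \<noteq> ?m"
  proof
    assume "?u = ?m" then have "k + 1 = k" by (rule injD[OF i])
    with k12(1) show False by simp
  qed
  have n2: "?v \<noteq> ?m"
  proof
    assume "?v = ?m" then have "k + 2 = k" by (rule injD[OF i])
    with k12(2) show False by simp
  qed
  have n3: "?u \<noteq> ?v"
  proof
    assume "?u = ?v" then have "k + 1 = k + 2" by (rule injD[OF i])
    with k12(3) show False by simp
  qed
  from tri3[OF n1 n2 n3] have "x (?m+1) * x (?m+2) = x ?u * x ?v"
  proof (elim disjE conjE)
    assume "?u = ?m+1" "?v = ?m+2" then show ?thesis by simp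
  next
    assume "?u = ?m+2" "?v = ?m+1" then show ?thesis by (simp add: mult.commute)
  qed
  then show "sigE \<sigma> (sharp x) k = sharp (sigE \<sigma> x) k"
    unfolding sigE_def sharp_def by simp
qed

lemma sigE_const[simp]: "sigE \<sigma> (\<lambda>_. c) = (\<lambda>_. c)" by (simp add: sigE_def o_def)
lemma sharp_const[simp]: "sharp (\<lambda>_. c) = (\<lambda>_. c * c)" by (simp add: sharp_def)


lemma rot3: fixes f :: "3 \<Rightarrow> 'a::comm_ring_1" assumes "f 0 * f 1 * f 2 = 1" shows "f k * f (k+1) * f (k+2) = 1"
proof -
  have a: "f 1 * f 2 * f 0 = 1" "f 2 * f 0 * f 1 = 1" using assms by (simp_all add: ac_simps)
  have e: "(1::3) + 1 = 2" "(1::3) + 2 = 0" "(2::3) + 1 = 0" "(2::3) + 2 = 1" "(0::3) + 1 = 1" "(0::3) + 2 = 2" by simp_all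
  consider "k = 0" | "k = 1" | "k = 2" using three_cases by blast
  then show ?thesis
  proof cases
    case 1 then show ?thesis using assms e by simp
  next
    case 2 then show ?thesis using a by (simp add: num34)
  next
    case 3 then show ?thesis using a by (simp add: num34)
  qed
qed

definition Good :: "(3 \<Rightarrow> 'a::field mat2) \<Rightarrow> bool" where
  "Good g \<longleftrightarrow> (\<forall>k. g k False False * g k True False = 0 \<and> g k False True * g k True True = 0
      \<and> g k False False * g k True True + g k False True * g k True False = 1
      \<and> g k False False = g (k+1) True True * g (k+2) True True
      \<and> g k True True = g (k+1) False False * g (k+2) False False
      \<and> g k False True = g (k+1) True False * g (k+2) True False
      \<and> g k True False = g (k+1) False True * g (k+2) False True)
    \<and> (\<forall>i j. g i True False * g j True True = 0 \<and> g i False False * g j False True = 0)"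

lemma Dg_Good: assumes "Dg g" shows "Good g"
proof -
  have D: "g k False True = 0" "g k True False = 0" "g k False False * g k True True = 1" for k
    using assms unfolding Dg_def by auto
  have P: "g k False False * g (k+1) False False * g (k+2) False False = 1" for k
    using assms unfolding Dg_def by (intro rot3[of "\<lambda>k. g k False False"]) simp
  have B1: "g k False False = g (k+1) True True * g (k+2) True True" for k
  proof -
    have "g k False False = g k False False * (g (k+1) False False * g (k+1) True True) * (g (k+2) False False * g (k+2) True True)"
      using D(3)[of "k+1"] D(3)[of "k+2"] by simp
    also have "\<dots> = (g k False False * g (k+1) False False * g (k+2) False False) * (g (k+1) True True * g (k+2) True True)"
      by (simp add: ac_simps)
    finally show ?thesis using P[of k] by simp
  qed
  have B2: "g k True True = g (k+1) False False * g (k+2) False False" for k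
  proof -
    have "g k True True = g k True True * (g k False False * g (k+1) False False * g (k+2) False False)"
      using P[of k] by simp
    also have "\<dots> = (g k False False * g k True True) * (g (k+1) False False * g (k+2) False False)"
      by (simp add: ac_simps)
    finally show ?thesis using D(3)[of k] by simp
  qed
  show ?thesis unfolding Good_def
    by (intro conjI allI B1 B2) (simp_all add: D)
qed

lemma Ag_Good: assumes "Ag g" shows "Good g"
proof -
  have D: "g k False False = 0" "g k True True = 0" "g k False True * g k True False = 1" for k
    using assms unfolding Ag_def by auto
  have P: "g k False True * g (k+1) False True * g (k+2) False True = 1" for k
    using assms unfolding Ag_def by (intro rot3[of "\<lambda>k. g k False True"]) simp
  have B1: "g k False True = g (k+1) True False * g (k+2) True False" for k
  proof -
    have "g k False True = g k False True * (g (k+1) False True * g (k+1) True False) * (g (k+2) False True * g (k+2) True False)"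
      using D(3)[of "k+1"] D(3)[of "k+2"] by simp
    also have "\<dots> = (g k False True * g (k+1) False True * g (k+2) False True) * (g (k+1) True False * g (k+2) True False)"
      by (simp add: ac_simps)
    finally show ?thesis using P[of k] by simp
  qed
  have B2: "g k True False = g (k+1) False True * g (k+2) False True" for k
  proof -
    have "g k True False = g k True False * (g k False True * g (k+1) False True * g (k+2) False True)"
      using P[of k] by simp
    also have "\<dots> = (g k False True * g k True False) * (g (k+1) False True * g (k+2) False True)"
      by (simp add: ac_simps)
    finally show ?thesis using D(3)[of k] by simp
  qed
  show ?thesis unfolding Good_def
    by (intro conjI allI B1 B2) (simp_all add: D)
qed

lemma ring_mixed: fixes c1 e1 c2 e2 X1 X2 Y1 Y2 :: "'a::comm_ring_1"
  assumes "c1 * e2 = 0" "e1 * c2 = 0"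
  shows "(c1*X1 + e1*Y1) * (c2*X2 + e2*Y2) = (c1*c2)*(X1*X2) + (e1*e2)*(Y1*Y2)"
proof -
  have "(c1*X1 + e1*Y1) * (c2*X2 + e2*Y2) = (c1*c2)*(X1*X2) + (c1*e2)*(X1*Y2) + (e1*c2)*(Y1*X2) + (e1*e2)*(Y1*Y2)"
    by (simp add: algebra_simps)
  then show ?thesis using assms by simp
qed

lemma ring_Q: fixes a b c e X Y :: "'a::comm_ring_1"
  assumes "a * c = 0" "b * e = 0" "a * e + b * c = 1"
  shows "(a*X + b*Y) * (c*X + e*Y) = X * Y"
proof -
  have "(a*X + b*Y) * (c*X + e*Y) = (a*c)*(X*X) + (a*e + b*c)*(X*Y) + (b*e)*(Y*Y)"
    by (simp add: algebra_simps)
  then show ?thesis using assms by simp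
qed

lemma Good_beta: assumes "Good g" shows "gE g (sharp Y, sharp X) = beta0 (gE g (X, Y))"
proof -
  have G: "g k False False = g (k+1) True True * g (k+2) True True"
      "g k True True = g (k+1) False False * g (k+2) False False"
      "g k False True = g (k+1) True False * g (k+2) True False"
      "g k True False = g (k+1) False True * g (k+2) False True" for k
    using assms unfolding Good_def by blast+
  have M: "g i True False * g j True True = 0" "g i False False * g j False True = 0" for i j
    using assms unfolding Good_def by blast+
  have M': "g i True True * g j True False = 0" "g i False True * g j False False = 0" for i j
    using M[of j i] by (simp_all add: mult.commute)
  have f: "g k False False * sharp Y k + g k False True * sharp X k
      = (g (k+1) True False * X (k+1) + g (k+1) True True * Y (k+1)) * (g (k+2) True False * X (k+2) + g (k+2) True True * Y (k+2))" for k
    unfolding ring_mixed[OF M(1) M'(1)] sharp_def G(1)[of k] G(3)[of k] by (simp add: algebra_simps)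
  have s: "g k True False * sharp Y k + g k True True * sharp X k
      = (g (k+1) False False * X (k+1) + g (k+1) False True * Y (k+1)) * (g (k+2) False False * X (k+2) + g (k+2) False True * Y (k+2))" for k
    unfolding ring_mixed[OF M(2) M'(2)] sharp_def G(2)[of k] G(4)[of k] by (simp add: algebra_simps)
  show ?thesis unfolding gE_def beta0_def
    by (simp add: f s sharp_def[of "\<lambda>k. _ k * X k + _ k * Y k"])
qed

lemma Good_Q: assumes "Good g" shows "Q0 (gE g (X, Y)) = (\<lambda>k. X k * Y k)"
proof
  fix k
  have G: "g k False False * g k True False = 0" "g k False True * g k True True = 0"
      "g k False False * g k True True + g k False True * g k True False = 1"
    using assms unfolding Good_def by blast+
  show "Q0 (gE g (X, Y)) k = X k * Y k" unfolding Q0_def gE_def by (simp add: ring_Q[OF G])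
qed

lemma sigE_inv1: "\<sigma> \<in> S3 \<Longrightarrow> sigE (inv \<sigma>) (sigE \<sigma> a) = a"
  unfolding S3_def sigE_def
  by (simp add: fun_eq_iff permutes_inverses inv_inv_eq permutes_bij)
lemma sigE_inv2: "\<sigma> \<in> S3 \<Longrightarrow> sigE \<sigma> (sigE (inv \<sigma>) a) = a"
  unfolding S3_def sigE_def
  by (simp add: fun_eq_iff permutes_inverses inv_inv_eq permutes_bij)

lemma gE_inv:
  assumes "\<And>k. h k False False * g k False False + h k False True * g k True False = 1"
    "\<And>k. h k False False * g k False True + h k False True * g k True True = 0"
    "\<And>k. h k True False * g k False False + h k True True * g k True False = 0"
    "\<And>k. h k True False * g k False True + h k True True * g k True True = 1"
  shows "gE h (gE g v) = v"
proof -
  have "(\<lambda>k. h k False False * (g k False False * fst v k + g k False True * snd v k) +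
           h k False True * (g k True False * fst v k + g k True True * snd v k)) = fst v"
  proof
    fix k
    have "h k False False * (g k False False * fst v k + g k False True * snd v k) +
           h k False True * (g k True False * fst v k + g k True True * snd v k)
        = (h k False False * g k False False + h k False True * g k True False) * fst v k
          + (h k False False * g k False True + h k False True * g k True True) * snd v k"
      by (simp add: algebra_simps)
    then show "h k False False * (g k False False * fst v k + g k False True * snd v k) +
           h k False True * (g k True False * fst v k + g k True True * snd v k) = fst v k"
      using assms(1,2)[of k] by simp
  qed
  moreover have "(\<lambda>k. h k True False * (g k False False * fst v k + g k False True * snd v k) +
           h k True True * (g k True False * fst v k + g k True True * snd v k)) = snd v"
  proof
    fix k
    have "h k True False * (g k False False * fst v k + g k False True * snd v k) +
           h k True True * (g k True False * fst v k + g k True True * snd v k)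
        = (h k True False * g k False False + h k True True * g k True False) * fst v k
          + (h k True False * g k False True + h k True True * g k True True) * snd v k"
      by (simp add: algebra_simps)
    then show "h k True False * (g k False False * fst v k + g k False True * snd v k) +
           h k True True * (g k True False * fst v k + g k True True * snd v k) = snd v k"
      using assms(3,4)[of k] by simp
  qed
  ultimately show ?thesis unfolding gE_def by (simp add: prod_eq_iff)
qed

definition invm :: "(3 \<Rightarrow> 'a::field mat2) \<Rightarrow> 3 \<Rightarrow> 'a mat2" where
  "invm g = (\<lambda>k i j. inverse (det2 (g k)) * (if i = j then g k (\<not> i) (\<not> j) else - g k i j))"

lemma inv_entries: fixes a b c e :: "'a::field" assumes "a*e - b*c \<noteq> 0"
  defines "i \<equiv> inverse (a*e - b*c)"
  shows "i * e * a + i * (- b) * c = 1" "i * e * b + i * (- b) * e = 0"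
    "i * (- c) * a + i * a * c = 0" "i * (- c) * b + i * a * e = 1"
    "a * (i * e) + b * (i * (- c)) = 1" "a * (i * (- b)) + b * (i * a) = 0"
    "c * (i * e) + e * (i * (- c)) = 0" "c * (i * (- b)) + e * (i * a) = 1"
proof -
  have "i * e * a + i * (- b) * c = i * (a*e - b*c)" by (simp add: algebra_simps)
  then show "i * e * a + i * (- b) * c = 1" using assms by simp
  show "i * e * b + i * (- b) * e = 0" by (simp add: algebra_simps)
  show "i * (- c) * a + i * a * c = 0" by (simp add: algebra_simps)
  have "i * (- c) * b + i * a * e = i * (a*e - b*c)" by (simp add: algebra_simps)
  then show "i * (- c) * b + i * a * e = 1" using assms by simp
  have "a * (i * e) + b * (i * (- c)) = i * (a*e - b*c)" by (simp add: algebra_simps)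
  then show "a * (i * e) + b * (i * (- c)) = 1" using assms by simp
  show "a * (i * (- b)) + b * (i * a) = 0" by (simp add: algebra_simps)
  show "c * (i * e) + e * (i * (- c)) = 0" by (simp add: algebra_simps)
  have "c * (i * (- b)) + e * (i * a) = i * (a*e - b*c)" by (simp add: algebra_simps)
  then show "c * (i * (- b)) + e * (i * a) = 1" using assms by simp
qed

lemma invm_left: assumes "\<And>k. det2 (g k) \<noteq> 0" shows "gE (invm g) (gE g v) = v"
proof (rule gE_inv)
  fix k
  note I = inv_entries[OF assms[of k, unfolded det2_def]]
  show "invm g k False False * g k False False + invm g k False True * g k True False = 1"
    using I(1) by (simp add: invm_def det2_def)
  show "invm g k False False * g k False True + invm g k False True * g k True True = 0"
    using I(2) by (simp add: invm_def det2_def)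
  show "invm g k True False * g k False False + invm g k True True * g k True False = 0"
    using I(3) by (simp add: invm_def det2_def)
  show "invm g k True False * g k False True + invm g k True True * g k True True = 1"
    using I(4) by (simp add: invm_def det2_def)
qed
lemma invm_right: assumes "\<And>k. det2 (g k) \<noteq> 0" shows "gE g (gE (invm g) v) = v"
proof (rule gE_inv)
  fix k
  note I = inv_entries[OF assms[of k, unfolded det2_def]]
  show "g k False False * invm g k False False + g k False True * invm g k True False = 1"
    using I(5) by (simp add: invm_def det2_def)
  show "g k False False * invm g k False True + g k False True * invm g k True True = 0"
    using I(6) by (simp add: invm_def det2_def)
  show "g k True False * invm g k False False + g k True True * invm g k True False = 0"
    using I(7) by (simp add: invm_def det2_def)
  show "g k True False * invm g k False True + g k True True * invm g k True True = 1"
    using I(8) by (simp add: invm_def det2_def)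
qed

lemma DA_det: assumes "Dg g \<or> Ag g" shows "det2 (g k) \<noteq> 0"
  using assms unfolding Dg_def Ag_def det2_def by auto

lemma AutC0_sup: assumes DA: "Dg g \<or> Ag g" and s: "\<sigma> \<in> S3" shows "(g, \<sigma>) \<in> AutC0"
proof -
  have G: "Good g" using DA Dg_Good Ag_Good by blast
  have det: "\<And>k. det2 (g k) \<noteq> 0" using DA_det[OF DA] .
  define \<phi> where "\<phi> = (\<lambda>v. gE g (sigE \<sigma> (fst v), sigE \<sigma> (snd v)))"
  define \<psi> where "\<psi> = (\<lambda>v. (sigE (inv \<sigma>) (fst (gE (invm g) v)), sigE (inv \<sigma>) (snd (gE (invm g) v))))"
  have l: "\<psi> (\<phi> v) = v" for v
    unfolding \<phi>_def \<psi>_def invm_left[OF det] by (simp add: sigE_inv1[OF s])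
  have r: "\<phi> (\<psi> v) = v" for v
    unfolding \<phi>_def \<psi>_def by (simp add: sigE_inv2[OF s] invm_right[OF det])
  have bij: "bij \<phi>"
    by (rule bijI, rule inj_on_inverseI[of _ \<psi>], rule l, rule surjI[of _ \<psi>], rule r)
  have add: "\<phi> ((\<lambda>k. fst v k + fst w k), (\<lambda>k. snd v k + snd w k))
              = ((\<lambda>k. fst (\<phi> v) k + fst (\<phi> w) k), (\<lambda>k. snd (\<phi> v) k + snd (\<phi> w) k))" for v w
    unfolding \<phi>_def gE_def sigE_def by (simp add: algebra_simps)
  have sc: "\<phi> (Esmult a v) = Esmult (sigE \<sigma> a) (\<phi> v)" for a v
    unfolding \<phi>_def gE_def sigE_def Esmult_def by (simp add: algebra_simps)
  have sc1: "\<phi> (Esmult (\<lambda>_. c) v) = Esmult (\<lambda>_. c) (\<phi> v)" for c v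
    using sc[of "\<lambda>_. c" v] by simp
  have Q: "sigE \<sigma> (Q0 v) = Q0 (\<phi> v)" for v
    unfolding \<phi>_def Good_Q[OF G] by (simp add: sigE_def Q0_def o_def)
  have B: "\<phi> (beta0 v) = beta0 (\<phi> v)" for v
  proof -
    have e: "beta0 v = (sharp (snd v), sharp (fst v))" by (simp add: beta0_def)
    show ?thesis unfolding \<phi>_def e by (simp add: sharp_comm[OF s] Good_beta[OF G])
  qed
  have "is_autC0 \<phi> \<sigma>" unfolding is_autC0_def using s bij add sc1 sc Q B by blast
  then show ?thesis unfolding AutC0_def \<phi>_def using det by simp
qed

lemma aut_alg:
  fixes a b c e :: "3 \<Rightarrow> 'a::field"
  assumes Q1: "\<And>k. a k * c k = 0" and Q2: "\<And>k. b k * e k = 0" and Q3: "\<And>k. a k * e k + b k * c k = 1"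
  and B1: "\<And>k. a k = e (k+1) * e (k+2)" and B2: "\<And>k. c k = b (k+1) * b (k+2)"
  and B3: "\<And>k. b k = c (k+1) * c (k+2)" and B4: "\<And>k. e k = a (k+1) * a (k+2)"
  shows "(\<forall>k. b k = 0 \<and> c k = 0 \<and> a k * e k = 1) \<and> a 0 * a 1 * a 2 = 1
       \<or> (\<forall>k. a k = 0 \<and> e k = 0 \<and> b k * c k = 1) \<and> b 0 * b 1 * b 2 = 1"
proof (cases "a 0 = 0")
  case False
  have "e 1 * e 2 = a 0" using B1[of 0] by simp
  then have e12: "e 1 \<noteq> 0" "e 2 \<noteq> 0" using False by auto
  then have b12: "b 1 = 0" "b 2 = 0" using Q2[of 1] Q2[of 2] by auto
  have c0: "c 0 = 0" using B2[of 0] b12 by simp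
  have ae0: "a 0 * e 0 = 1" using Q3[of 0] c0 by simp
  then have "e 0 \<noteq> 0" by auto
  then have b0: "b 0 = 0" using Q2[of 0] by simp
  have c1: "c 1 = 0" using B2[of 1] b0 b12 by (simp add: num34)
  have c2: "c 2 = 0" using B2[of 2] b0 b12 by (simp add: num34)
  have ae1: "a 1 * e 1 = 1" using Q3[of 1] c1 by simp
  have ae2: "a 2 * e 2 = 1" using Q3[of 2] c2 by simp
  have "a 0 * a 1 * a 2 = (a 1 * e 1) * (a 2 * e 2)" using B1[of 0] by (simp add: ac_simps)
  then have P: "a 0 * a 1 * a 2 = 1" using ae1 ae2 by simp
  have "\<forall>k. b k = 0 \<and> c k = 0 \<and> a k * e k = 1"
    unfolding all3 using b0 b12 c0 c1 c2 ae0 ae1 ae2 by simp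
  with P show ?thesis by blast
next
  case True
  have bc0: "b 0 * c 0 = 1" using Q3[of 0] True by simp
  then have "b 0 \<noteq> 0" by auto
  then have "c 1 * c 2 \<noteq> 0" using B3[of 0] by simp
  then have c12: "c 1 \<noteq> 0" "c 2 \<noteq> 0" by auto
  then have a12: "a 1 = 0" "a 2 = 0" using Q1[of 1] Q1[of 2] by auto
  have e0: "e 0 = 0" using B4[of 0] a12 by simp
  have e1: "e 1 = 0" using B4[of 1] a12 True by (simp add: num34)
  have e2: "e 2 = 0" using B4[of 2] a12 True by (simp add: num34)
  have bc1: "b 1 * c 1 = 1" using Q3[of 1] a12 by simp
  have bc2: "b 2 * c 2 = 1" using Q3[of 2] a12 by simp
  have "b 0 * b 1 * b 2 = (b 1 * c 1) * (b 2 * c 2)" using B3[of 0] by (simp add: ac_simps)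
  then have P: "b 0 * b 1 * b 2 = 1" using bc1 bc2 by simp
  have "\<forall>k. a k = 0 \<and> e k = 0 \<and> b k * c k = 1"
    unfolding all3 using True a12 e0 e1 e2 bc0 bc1 bc2 by simp
  with P show ?thesis by blast
qed

lemma AutC0_sub: assumes "(g, \<sigma>) \<in> AutC0" shows "(Dg g \<or> Ag g) \<and> \<sigma> \<in> S3"
proof -
  define \<phi> where "\<phi> = (\<lambda>v. gE g (sigE \<sigma> (fst v), sigE \<sigma> (snd v)))"
  have A: "is_autC0 \<phi> \<sigma>" using assms unfolding AutC0_def \<phi>_def by simp
  then have s: "\<sigma> \<in> S3" and Q: "\<And>v. sigE \<sigma> (Q0 v) = Q0 (\<phi> v)" and B: "\<And>v. \<phi> (beta0 v) = beta0 (\<phi> v)"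
    unfolding is_autC0_def by blast+
  have p10: "\<phi> ((\<lambda>_. 1), (\<lambda>_. 0)) = ((\<lambda>k. g k False False), (\<lambda>k. g k True False))"
    unfolding \<phi>_def gE_def by simp
  have p01: "\<phi> ((\<lambda>_. 0), (\<lambda>_. 1)) = ((\<lambda>k. g k False True), (\<lambda>k. g k True True))"
    unfolding \<phi>_def gE_def by simp
  have p11: "\<phi> ((\<lambda>_. 1), (\<lambda>_. 1)) = ((\<lambda>k. g k False False + g k False True), (\<lambda>k. g k True False + g k True True))"
    unfolding \<phi>_def gE_def by simp
  have "(\<lambda>_. 0) = Q0 (\<phi> ((\<lambda>_. 1), (\<lambda>_. 0)))" using Q[of "((\<lambda>_. 1), (\<lambda>_. 0))"] by (simp add: Q0_def)
  then have Q1: "g k False False * g k True False = 0" for k unfolding p10 Q0_def by (simp add: fun_eq_iff)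
  have "(\<lambda>_. 0) = Q0 (\<phi> ((\<lambda>_. 0), (\<lambda>_. 1)))" using Q[of "((\<lambda>_. 0), (\<lambda>_. 1))"] by (simp add: Q0_def)
  then have Q2: "g k False True * g k True True = 0" for k unfolding p01 Q0_def by (simp add: fun_eq_iff)
  have "(\<lambda>_. 1) = Q0 (\<phi> ((\<lambda>_. 1), (\<lambda>_. 1)))" using Q[of "((\<lambda>_. 1), (\<lambda>_. 1))"] by (simp add: Q0_def)
  then have H: "(g k False False + g k False True) * (g k True False + g k True True) = 1" for k
    unfolding p11 Q0_def by (simp add: fun_eq_iff)
  have Q3: "g k False False * g k True True + g k False True * g k True False = 1" for k
  proof -
    have "1 = (g k False False + g k False True) * (g k True False + g k True True)" using H[of k] by simp
    also have "\<dots> = g k False False * g k True False + g k False True * g k True True + (g k False False * g k True True + g k False True * g k True False)"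
      by (simp add: algebra_simps)
    also have "\<dots> = g k False False * g k True True + g k False True * g k True False" unfolding Q1[of k] Q2[of k] by simp
    finally show ?thesis by simp
  qed
  have b01: "beta0 ((\<lambda>_. 0), (\<lambda>_. 1)) = ((\<lambda>_. 1), (\<lambda>_. 0))" by (simp add: beta0_def)
  have b10: "beta0 ((\<lambda>_. 1), (\<lambda>_. 0)) = ((\<lambda>_. 0), (\<lambda>_. 1))" by (simp add: beta0_def)
  have "((\<lambda>k. g k False False), (\<lambda>k. g k True False)) = beta0 ((\<lambda>k. g k False True), (\<lambda>k. g k True True))"
    using B[of "((\<lambda>_. 0), (\<lambda>_. 1))"] unfolding b01 p10 p01 .
  then have B1: "g k False False = g (k+1) True True * g (k+2) True True"
    and B2: "g k True False = g (k+1) False True * g (k+2) False True" for k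
    unfolding beta0_def sharp_def by (simp_all add: fun_eq_iff)
  have "((\<lambda>k. g k False True), (\<lambda>k. g k True True)) = beta0 ((\<lambda>k. g k False False), (\<lambda>k. g k True False))"
    using B[of "((\<lambda>_. 1), (\<lambda>_. 0))"] unfolding b10 p10 p01 .
  then have B3: "g k False True = g (k+1) True False * g (k+2) True False"
    and B4: "g k True True = g (k+1) False False * g (k+2) False False" for k
    unfolding beta0_def sharp_def by (simp_all add: fun_eq_iff)
  from aut_alg[of "\<lambda>k. g k False False" "\<lambda>k. g k True False" "\<lambda>k. g k False True" "\<lambda>k. g k True True",
      OF Q1 Q2 Q3 B1 B2 B3 B4]
  have "Dg g \<or> Ag g" unfolding Dg_def Ag_def by (simp add: mult.commute)
  with s show ?thesis by simp
qed

lemma AutC0_eq: "AutC0 = Stab_M \<times> S3"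
proof (intro set_eqI iffI)
  fix p :: "(3 \<Rightarrow> 'a::field mat2) \<times> (3 \<Rightarrow> 3)"
  assume "p \<in> AutC0"
  then show "p \<in> Stab_M \<times> S3" using AutC0_sub[of "fst p" "snd p"] unfolding StabM_eq by (auto simp: mem_Times_iff)
next
  fix p :: "(3 \<Rightarrow> 'a::field mat2) \<times> (3 \<Rightarrow> 3)"
  assume "p \<in> Stab_M \<times> S3"
  then show "p \<in> AutC0" using AutC0_sup[of "fst p" "snd p"] unfolding StabM_eq by (auto simp: mem_Times_iff)
qed

theorem proposition6p1:
  assumes "(2::'a::field) \<noteq> 0" and "(3::'a) \<noteq> 0"
  shows "(Stab_M :: (3 \<Rightarrow> 'a mat2) set)
           = Torus \<union> (\<lambda>g. \<lambda>k. mmult2 (g k) wmat) ` Torus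
       \<and> (Stab_Mtilde :: ((3 \<Rightarrow> 'a mat2) \<times> (3 \<Rightarrow> 3)) set) = Stab_M \<times> S3
       \<and> (Stab_Mtilde :: ((3 \<Rightarrow> 'a mat2) \<times> (3 \<Rightarrow> 3)) set) = AutC0"
proof (intro conjI)
  show "(Stab_M :: (3 \<Rightarrow> 'a mat2) set) = Torus \<union> (\<lambda>g. \<lambda>k. mmult2 (g k) wmat) ` Torus"
    by (simp only: StabM_eq wTorus_eq) (auto simp: Torus_eq)
  show "(Stab_Mtilde :: ((3 \<Rightarrow> 'a mat2) \<times> (3 \<Rightarrow> 3)) set) = Stab_M \<times> S3" by (rule StabMt_eq)
  show "(Stab_Mtilde :: ((3 \<Rightarrow> 'a mat2) \<times> (3 \<Rightarrow> 3)) set) = AutC0" unfolding StabMt_eq AutC0_eq ..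
qed

end
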